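(* Let $a,b>0$. As $q\to1-0$, $$\log\big\{(q^a:q^{a+b})_\infty\,(q^b:q^{a+b})_\infty\big\}=\frac{\pi^2}{3(a+b)\log q}+\log\Big\{2\sin\Big(\frac{a}{a+b}\pi\Big)\Big\}+O(\log q).$$
   Context: For $0<q<1$ and $c,d>0$, $(q^c:q^d)_\infty=\prod_{r=0}^{\infty}(1-q^{c+dr})$. *)

theory Defs
  imports "HOL-Analysis.Analysis" "HOL-Library.Landau_Symbols"
begin

text \<open>The infinite product (q^c : q^d)_inf = prod_{r>=0} (1 - q^(c+d r)), for 0<q<1, c,d>0.\<close>
definition qpoch :: "real \<Rightarrow> real \<Rightarrow> real \<Rightarrow> real" where
  "qpoch q c d = (\<Prod>r. 1 - q powr (c + d * real r))"

end

theory Submission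
  imports Defs "HOL-Real_Asymp.Real_Asymp"
begin

lemma sinh_lower:
  fixes v :: real assumes "0 \<le> v"
  shows "2 * v \<le> exp v - exp (-v)"
proof -
  have 1: "1 + v + v\<^sup>2 / 2 \<le> exp v" using exp_lower_Taylor_quadratic assms by blast
  obtain t where t: "exp (-v) = (\<Sum>m<3. (-v) ^ m / fact m) + (exp t / fact 3) * (-v) ^ 3"
    using Maclaurin_exp_le[of "-v" 3] by blast
  have "(exp t / fact 3) * (-v) ^ 3 \<le> 0"
    using assms by (simp add: mult_nonneg_nonneg)
  moreover have "(\<Sum>m<3. (-v) ^ m / fact m) = 1 - v + v\<^sup>2/2"
    by (simp add: numeral_3_eq_3 power2_eq_square)
  ultimately have "exp (-v) \<le> 1 - v + v\<^sup>2/2" using t by linarith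
  with 1 show ?thesis by linarith
qed

lemma sinh_upper:
  fixes v :: real assumes "0 \<le> v" "v \<le> 1"
  shows "exp v - exp (-v) \<le> 2 * v + v^3"
proof -
  obtain t where t: "\<bar>t\<bar> \<le> \<bar>v\<bar>" "exp v = (\<Sum>m<3. v ^ m / fact m) + (exp t / fact 3) * v ^ 3"
    using Maclaurin_exp_le[of "v" 3] by blast
  obtain s where s: "\<bar>s\<bar> \<le> \<bar>-v\<bar>" "exp (-v) = (\<Sum>m<3. (-v) ^ m / fact m) + (exp s / fact 3) * (-v) ^ 3"
    using Maclaurin_exp_le[of "-v" 3] by blast
  have et: "exp t \<le> 3" using t(1) assms exp_le exp_le_cancel_iff[of t 1] by linarith
  have es: "exp s \<le> 3" using s(1) assms exp_le exp_le_cancel_iff[of s 1] by linarith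
  have v3: "0 \<le> v^3" using assms by simp
  have "exp v = 1 + v + v\<^sup>2/2 + exp t / 6 * v^3" using t(2) by (simp add: numeral_3_eq_3 power2_eq_square)
  moreover have "exp (-v) = 1 - v + v\<^sup>2/2 - exp s / 6 * v^3" using s(2) by (simp add: numeral_3_eq_3 power2_eq_square)
  moreover have "exp t / 6 * v^3 \<le> v^3/2" using mult_right_mono[OF et v3] by simp
  moreover have "exp s / 6 * v^3 \<le> v^3/2" using mult_right_mono[OF es v3] by simp
  moreover have "0 \<le> exp s / 6 * v^3" using v3 by simp
  ultimately show ?thesis by linarith
qed

definition gq :: "real \<Rightarrow> real" where "gq u = ln (1 - exp (-u))"
definition kq :: "real \<Rightarrow> real" where "kq u = gq u - ln u"
definition k1q :: "real \<Rightarrow> real" where "k1q u = 1 / (exp u - 1) - 1 / u"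
definition k2q :: "real \<Rightarrow> real" where "k2q u = 1 / u^2 - exp u / (exp u - 1)^2"

lemma kq_bounds:
  fixes u :: real assumes u: "0 < u"
  shows "- u / 2 \<le> kq u" "kq u \<le> 0"
proof -
  have e1: "exp (-u) < 1" using u by simp
  have p: "0 < 1 - exp (-u)" using e1 by simp
  have kq: "kq u = ln ((1 - exp (-u)) / u)"
    unfolding kq_def gq_def using p u by (simp add: ln_div)
  have "1 - u \<le> exp (-u)" using exp_ge_add_one_self[of "-u"] by simp
  hence "(1 - exp (-u)) / u \<le> 1" using u by (simp add: divide_le_eq)
  thus "kq u \<le> 0" unfolding kq using p u by simp
  have w: "u \<le> exp (u/2) - exp (-(u/2))" using sinh_lower[of "u/2"] u by simp
  have "1 - exp (-u) = exp (-(u/2)) * (exp (u/2) - exp (-(u/2)))"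
    by (simp add: algebra_simps flip: exp_add)
  also have "\<dots> \<ge> exp (-(u/2)) * u" using w by (simp add: mult_left_mono)
  finally have "exp (-(u/2)) \<le> (1 - exp (-u)) / u" using u by (simp add: le_divide_eq mult.commute)
  hence "ln (exp (-(u/2))) \<le> ln ((1 - exp (-u)) / u)" using p u by (subst ln_le_cancel_iff) auto
  thus "- u / 2 \<le> kq u" unfolding kq by simp
qed

lemma kq_deriv:
  fixes u :: real assumes u: "0 < u"
  shows "(kq has_real_derivative k1q u) (at u)"
proof -
  have e1: "exp (-u) < 1" using u by simp
  have e2: "exp u > 1" using u by simp
  have "((\<lambda>u. ln (1 - exp (-u)) - ln u) has_real_derivative
         (exp (-u) / (1 - exp (-u)) - 1 / u)) (at u)"
    using e1 u by (auto intro!: derivative_eq_intros simp: field_simps)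
  moreover have "exp (-u) / (1 - exp (-u)) = 1 / (exp u - 1)"
    using e1 e2 by (simp add: exp_minus field_simps)
  ultimately show ?thesis unfolding kq_def gq_def k1q_def[abs_def] by (simp add: fun_eq_iff)
qed

lemma k1q_deriv:
  fixes u :: real assumes u: "0 < u"
  shows "(k1q has_real_derivative k2q u) (at u)"
proof -
  have e2: "exp u - 1 \<noteq> 0" using u by simp
  have "((\<lambda>u. 1 / (exp u - 1) - 1 / u) has_real_derivative
         (- exp u / (exp u - 1)^2 + 1 / u^2)) (at u)"
    using e2 u by (auto intro!: derivative_eq_intros simp: field_simps power2_eq_square)
  thus ?thesis unfolding k1q_def[abs_def] k2q_def by (simp add: algebra_simps)
qed

lemma k2q_bounds:
  fixes u :: real assumes u: "0 < u"
  shows "0 \<le> k2q u" "k2q u \<le> 4 / (1 + u)^2"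
proof -
  define w where "w = exp (u/2) - exp (-(u/2))"
  have uw: "u \<le> w" using sinh_lower[of "u/2"] u by (simp add: w_def)
  have wpos: "0 < w" using uw u by simp
  have "exp u - 1 = exp (u/2) * w"
    by (simp add: w_def algebra_simps flip: exp_add)
  hence "exp u / (exp u - 1)^2 = exp u / (exp (u/2)^2 * w^2)" by (simp add: power_mult_distrib)
  also have "exp (u/2)^2 = exp u" by (simp flip: exp_of_nat_mult)
  finally have E: "exp u / (exp u - 1)^2 = 1 / w^2" by simp
  have k: "k2q u = 1/u^2 - 1/w^2" unfolding k2q_def E ..
  have "u^2 \<le> w^2" using uw u by (simp add: power_mono)
  hence "1/w^2 \<le> 1/u^2" using u by (simp add: frac_le)
  thus "0 \<le> k2q u" using k by simp
  have le1: "k2q u \<le> 1/u^2" using k by simp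
  show "k2q u \<le> 4 / (1 + u)^2"
  proof (cases "u \<le> 1")
    case False
    have "(1 + u)^2 \<le> (2*u)^2" using False by (intro power_mono) auto
    hence "1/u^2 \<le> 4/(1+u)^2" using u False by (simp add: field_simps)
    thus ?thesis using le1 by linarith
  next
    case True
    have wu: "w \<le> u + u^3/8" using sinh_upper[of "u/2"] u True
      by (simp add: w_def power_divide)
    have "k2q u = (w^2 - u^2) / (u^2 * w^2)" using k u wpos by (simp add: field_simps)
    also have "\<dots> \<le> (w^2 - u^2) / (u^2 * u^2)"
      using \<open>u^2 \<le> w^2\<close> u wpos by (intro divide_left_mono mult_left_mono) auto
    also have "\<dots> \<le> ((u + u^3/8)^2 - u^2) / (u^2 * u^2)"
      using wu wpos u by (intro divide_right_mono diff_right_mono power_mono) auto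
    also have "\<dots> = 1/4 + u^2/64" using u by (simp add: field_simps power2_eq_square power3_eq_cube)
    also have "\<dots> \<le> 1"
    proof -
      have "u^2 \<le> 1" using True u by (simp add: power_le_one)
      thus ?thesis by simp
    qed
    also have "1 \<le> 4 / (1 + u)^2"
    proof -
      have "(1+u)^2 \<le> 2^2" using True u by (intro power_mono) auto
      thus ?thesis using u by (simp add: field_simps)
    qed
    finally show ?thesis .
  qed
qed

lemma kq_second_diff_pos:
  fixes p d B :: real
  assumes d: "0 < d" and pd: "0 < p - d"
    and B: "\<And>z. p - d \<le> z \<Longrightarrow> z \<le> p + d \<Longrightarrow> k2q z \<le> B"
  shows "\<bar>kq (p + d) + kq (p - d) - 2 * kq p\<bar> \<le> 2 * d^2 * B"
proof -
  obtain z1 where z1: "p < z1" "z1 < p + d" "kq (p + d) - kq p = ((p + d) - p) * k1q z1"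
    using MVT2[of p "p + d" kq k1q] d pd kq_deriv by auto
  obtain z2 where z2: "p - d < z2" "z2 < p" "kq p - kq (p - d) = (p - (p - d)) * k1q z2"
    using MVT2[of "p - d" p kq k1q] d pd kq_deriv by auto
  obtain z3 where z3: "z2 < z3" "z3 < z1" "k1q z1 - k1q z2 = (z1 - z2) * k2q z3"
    using MVT2[of z2 z1 k1q k2q] z1 z2 pd k1q_deriv by auto
  have e: "kq (p + d) + kq (p - d) - 2 * kq p = d * ((z1 - z2) * k2q z3)"
  proof -
    have "kq (p + d) + kq (p - d) - 2 * kq p = d * (k1q z1 - k1q z2)"
      using z1(3) z2(3) by (simp add: algebra_simps)
    thus ?thesis using z3(3) by simp
  qed
  have k0: "0 \<le> k2q z3" using k2q_bounds(1)[of z3] z3 z2 pd by linarith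
  have kB: "k2q z3 \<le> B" using B[of z3] z3 z2 z1 by linarith
  have zz: "0 \<le> z1 - z2" "z1 - z2 \<le> 2 * d" using z1 z2 z3 by linarith+
  have "0 \<le> d * ((z1 - z2) * k2q z3)" using d zz k0 by simp
  moreover have "d * ((z1 - z2) * k2q z3) \<le> d * ((2 * d) * B)"
    using d zz k0 kB by (intro mult_left_mono mult_mono) auto
  ultimately show ?thesis unfolding e by (simp add: power2_eq_square algebra_simps)
qed

lemma kq_second_diff:
  fixes p d B :: real
  assumes pd: "0 < p - \<bar>d\<bar>"
    and B: "\<And>z. p - \<bar>d\<bar> \<le> z \<Longrightarrow> z \<le> p + \<bar>d\<bar> \<Longrightarrow> k2q z \<le> B"
  shows "\<bar>kq (p + d) + kq (p - d) - 2 * kq p\<bar> \<le> 2 * d^2 * B"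
proof (cases "d = 0")
  case True
  then show ?thesis using B[of p] k2q_bounds(1)[of p] pd by simp
next
  case False
  have "\<bar>kq (p + \<bar>d\<bar>) + kq (p - \<bar>d\<bar>) - 2 * kq p\<bar> \<le> 2 * \<bar>d\<bar>^2 * B"
    using False pd B by (intro kq_second_diff_pos) auto
  moreover have "kq (p + \<bar>d\<bar>) + kq (p - \<bar>d\<bar>) = kq (p + d) + kq (p - d)"
    by (cases "d \<ge> 0") auto
  ultimately show ?thesis by simp
qed

lemma gq_series:
  fixes u :: real assumes u: "0 < u"
  shows "(\<lambda>m. - (exp (-u) ^ m / real m)) sums gq u"
proof -
  have "\<bar>- exp (-u)\<bar> < 1" using u by simp
  from ln_series'[OF this] show ?thesis by (simp add: gq_def)
qed

lemma gq_sums: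
  fixes h c :: real assumes h: "0 < h" and c: "0 < c"
  shows "(\<lambda>r. gq (h * (real r + c))) sums
          (- (\<Sum>m. exp (- (h * c * real m)) / (real m * (1 - exp (- (h * real m))))))"
proof -
  define b where "b m = exp (- (h * c * real m)) / (real m * (1 - exp (- (h * real m))))" for m :: nat
  define a where "a m R = (\<Sum>r<R. exp (- (h * (real r + c))) ^ m / real m)" for m R :: nat
  have trm: "exp (- (h * (real r + c))) ^ m = exp (- (h * c * real m)) * exp (- (h * real m)) ^ r" for r m :: nat
    by (simp flip: exp_of_nat_mult exp_add add: algebra_simps)
  have bsums: "(\<lambda>r. exp (- (h * (real r + c))) ^ m / real m) sums b m" for m
  proof (cases "m = 0")
    case True
    then show ?thesis by (simp add: b_def)
  next
    case False
    have z: "exp (- (h * real m)) < 1" using False h by simp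
    have "(\<lambda>r. exp (- (h * real m)) ^ r) sums (1 / (1 - exp (- (h * real m))))"
      using geometric_sums[of "exp (- (h * real m))"] z by simp
    hence "(\<lambda>r. exp (- (h * c * real m)) / real m * exp (- (h * real m)) ^ r) sums
           (exp (- (h * c * real m)) / real m * (1 / (1 - exp (- (h * real m)))))"
      by (rule sums_mult)
    thus ?thesis unfolding trm b_def by (simp add: field_simps)
  qed
  have alim: "(\<lambda>R. a m R) \<longlonglongrightarrow> b m" for m
    using bsums[of m] unfolding a_def sums_def .
  have anonneg: "0 \<le> exp (- (h * (real r + c))) ^ m / real m" for r m :: nat by simp
  have abound: "norm (a m R) \<le> b m" for m R
  proof -
    have "0 \<le> a m R" unfolding a_def by (intro sum_nonneg) simp
    moreover have "a m R \<le> b m" unfolding a_def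
      using sum_le_suminf[OF sums_summable[OF bsums[of m]], of "{..<R}"] sums_unique[OF bsums[of m]] by simp
    ultimately show ?thesis by simp
  qed
  have bsum: "summable b"
  proof (rule summable_comparison_test')
    show "summable (\<lambda>m. exp (- (h * c)) ^ m / (1 - exp (- h)))"
      using h c by (intro summable_divide summable_geometric) simp
    fix m :: nat assume m: "1 \<le> m"
    have e1: "exp (- h) < 1" using h by simp
    have "exp (- (h * real m)) \<le> exp (- h)" using m h by (simp add: mult_le_cancel_left1)
    hence hle: "1 - exp (- h) \<le> real m * (1 - exp (- (h * real m)))"
      using m e1 by (smt (verit) mult_le_cancel_right1 of_nat_1 of_nat_mono)
    have "b m \<le> exp (- (h * c * real m)) / (1 - exp (- h))"
    proof -
      have "0 < h * real m" using m h by simp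
      hence pm: "0 < real m * (1 - exp (- (h * real m)))" using m by simp
      have pp: "0 < real m * (1 - exp (- (h * real m))) * (1 - exp (- h))"
        by (rule mult_pos_pos[OF pm]) (use e1 in simp)
      show ?thesis unfolding b_def
        by (rule divide_left_mono[OF hle _ pp]) simp
    qed
    moreover have "exp (- (h * c * real m)) = exp (- (h * c)) ^ m"
      by (simp flip: exp_of_nat_mult add: algebra_simps)
    moreover have "0 \<le> b m" unfolding b_def using h by (simp add: divide_nonneg_nonneg)
    ultimately show "norm (b m) \<le> exp (- (h * c)) ^ m / (1 - exp (- h))" by simp
  qed
  have T: "((\<lambda>R. \<Sum>m. a m R) \<longlongrightarrow> suminf b) sequentially"
  proof -
    have ev: "\<forall>\<^sub>F (k, n) in sequentially \<times>\<^sub>F sequentially. norm (a k n) \<le> b k"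
      using abound by (intro always_eventually) auto
    show ?thesis using tannerys_theorem[OF alim ev bsum] by simp
  qed
  have "(\<Sum>r<R. gq (h * (real r + c))) = - (\<Sum>m. a m R)" for R
  proof -
    have "(\<Sum>r<R. gq (h * (real r + c))) = (\<Sum>r<R. \<Sum>m. - (exp (- (h * (real r + c))) ^ m / real m))"
      using gq_series h c by (intro sum.cong refl sums_unique) auto
    also have "\<dots> = (\<Sum>m. \<Sum>r<R. - (exp (- (h * (real r + c))) ^ m / real m))"
    proof (rule suminf_sum[symmetric])
      fix r assume "r \<in> {..<R}"
      have "0 < h * (real r + c)" using h c by simp
      from sums_summable[OF gq_series[OF this]]
      show "summable (\<lambda>m. - (exp (- (h * (real r + c))) ^ m / real m))" .
    qed
    also have "\<dots> = - (\<Sum>m. a m R)"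
    proof -
      have "summable (\<lambda>m. a m R)"
        by (rule summable_comparison_test'[OF bsum, of 0]) (use abound in auto)
      thus ?thesis unfolding a_def by (simp add: sum_negf suminf_minus)
    qed
    finally show ?thesis .
  qed
  hence "(\<lambda>R. \<Sum>r<R. gq (h * (real r + c))) \<longlonglongrightarrow> - suminf b"
    using tendsto_minus[OF T] by simp
  thus ?thesis unfolding sums_def b_def by simp
qed

lemma ratio_alg:
  fixes m x P Q :: real
  assumes m: "0 \<le> m" and x: "0 < x" "x < 1" and PQ: "0 < P" "0 < Q"
  shows "(x * (m + 1 - x)) / ((1/2) * (m + 1/2)) * (P / Q) * ((m + 1 + x) * (m + 1 + (1 - x)) / (m + 1 + 1/2)^2)
       = (x * ((m + 1) + 1 - x)) / ((1/2) * ((m + 1) + 1/2)) * ((P * (1 - x^2 / (m + 1)^2)) / (Q * (1 - (1/2)^2 / (m + 1)^2)))"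
proof -
  have K: "0 < m + 1" using m by simp
  have K2: "(m + 1)^2 \<noteq> 0" using K by simp
  have f1: "1 - x^2 / (m + 1)^2 = (m + 1 - x) * (m + 1 + x) / (m + 1)^2"
  proof -
    have "1 - x^2 / (m + 1)^2 = ((m + 1)^2 - x^2) / (m + 1)^2" using K2 by (simp add: diff_divide_distrib)
    also have "(m + 1)^2 - x^2 = (m + 1 - x) * (m + 1 + x)" by (simp add: algebra_simps power2_eq_square)
    finally show ?thesis .
  qed
  have f2: "1 - (1/2)^2 / (m + 1)^2 = (m + 1/2) * (m + 3/2) / (m + 1)^2"
  proof -
    have "1 - (1/2)^2 / (m + 1)^2 = ((m + 1)^2 - (1/2)^2) / (m + 1)^2" using K2 by (simp add: diff_divide_distrib)
    also have "(m + 1)^2 - (1/2)^2 = (m + 1/2) * (m + 3/2)" by (simp add: field_simps power2_eq_square)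
    finally show ?thesis .
  qed
  have abs: "(x * A) / ((1/2) * D) * (P / Q) * (B * C / E^2)
       = (x * C) / ((1/2) * E) * ((P * (A * B / K^2)) / (Q * (D * E / K^2)))"
    if "A \<noteq> 0" "D \<noteq> 0" "E \<noteq> 0" "K \<noteq> 0" "P \<noteq> 0" "Q \<noteq> 0" for A B C D E K :: real
    using that by (simp add: field_simps power2_eq_square)
  have e1: "m + 1 + 1/2 = m + 3/2" "(m + 1) + 1 - x = m + 1 + (1 - x)" "(m + 1) + 1/2 = m + 3/2" by simp_all
  show ?thesis unfolding f1 f2 e1
    by (rule abs) (use m x PQ in auto)
qed

definition Pq :: "real \<Rightarrow> nat \<Rightarrow> real" where
  "Pq z n = (\<Prod>k=1..n. 1 - z^2 / (real k)^2)"

lemma Pq_pos: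
  fixes z :: real assumes "0 \<le> z" "z < 1"
  shows "0 < Pq z n"
  unfolding Pq_def
proof (intro prod_pos)
  fix k assume k: "k \<in> {1..n}"
  have "z^2 < 1" using assms by (simp add: power_less_one_iff abs_less_iff) 
  also have "1 \<le> (real k)^2" using k by simp
  finally have "z^2 / (real k)^2 < 1" using k by (simp add: divide_less_eq)
  thus "0 < 1 - z^2 / (real k)^2" by simp
qed

lemma ratio_prod_identity:
  fixes x :: real assumes x: "0 < x" "x < 1"
  shows "(\<Prod>r<Suc n. (real r + x) * (real r + (1 - x)) / (real r + 1/2)^2)
       = (x * (real n + 1 - x)) / ((1/2) * (real n + 1/2)) * (Pq x n / Pq (1/2) n)"
proof (induction n)
  case 0
  then show ?case using x by (simp add: Pq_def field_simps power2_eq_square)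
next
  case (Suc n)
  have p1: "0 < Pq x n" "0 < Pq (1/2) n" using x by (auto intro!: Pq_pos)
  have PS: "Pq z (Suc n) = Pq z n * (1 - z^2 / (real n + 1)^2)" for z
    unfolding Pq_def by (simp add: prod.cl_ivl_Suc add.commute)
  have n1: "real n + 1 - x > 0" "real n + 1/2 > 0" "real n + 1 > 0" using x by auto
  have "(\<Prod>r<Suc (Suc n). (real r + x) * (real r + (1 - x)) / (real r + 1/2)^2)
      = (x * (real n + 1 - x)) / ((1/2) * (real n + 1/2)) * (Pq x n / Pq (1/2) n)
        * ((real n + 1 + x) * (real n + 1 + (1 - x)) / (real n + 1 + 1/2)^2)"
    using Suc by (simp add: add.commute)
  also have "\<dots> = (x * (real (Suc n) + 1 - x)) / ((1/2) * (real (Suc n) + 1/2)) * (Pq x (Suc n) / Pq (1/2) (Suc n))"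
    unfolding PS using ratio_alg[of "real n" x "Pq x n" "Pq (1/2) n"] p1 x by simp
  finally show ?case .
qed

lemma sin_ratio_lim:
  fixes x :: real assumes x: "0 < x" "x < 1"
  shows "(\<lambda>N. \<Sum>r<N. ln ((real r + x) * (real r + (1 - x)) / (real r + 1/2)^2))
           \<longlonglongrightarrow> ln (sin (pi * x))"
proof -
  have l1: "(\<lambda>n. Pq x n) \<longlonglongrightarrow> sin (pi * x) / (pi * x)"
    unfolding Pq_def using sin_product_formula_real'[of x] x by simp
  have l2: "(\<lambda>n. Pq (1/2) n) \<longlonglongrightarrow> 2 / pi"
    unfolding Pq_def using sin_product_formula_real'[of "1/2"] by simp
  have l3: "(\<lambda>n. (real n + 1 - x) / (real n + 1/2)) \<longlonglongrightarrow> 1"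
    by real_asymp
  have "(\<lambda>n. (x / (1/2)) * ((real n + 1 - x) / (real n + 1/2)) * (Pq x n / Pq (1/2) n))
          \<longlonglongrightarrow> (x / (1/2)) * 1 * ((sin (pi * x) / (pi * x)) / (2 / pi))"
    by (intro tendsto_intros l1 l2 l3) simp
  also have "(x / (1/2)) * 1 * ((sin (pi * x) / (pi * x)) / (2 / pi)) = sin (pi * x)"
    using x by (simp add: field_simps)
  finally have L: "(\<lambda>n. (\<Prod>r<Suc n. (real r + x) * (real r + (1 - x)) / (real r + 1/2)^2)) \<longlonglongrightarrow> sin (pi * x)"
    unfolding ratio_prod_identity[OF x] by (simp add: field_simps)
  have sp: "0 < sin (pi * x)" using x by (intro sin_gt_zero) auto
  have L2: "(\<lambda>n. ln (\<Prod>r<Suc n. (real r + x) * (real r + (1 - x)) / (real r + 1/2)^2)) \<longlonglongrightarrow> ln (sin (pi * x))"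
    by (intro tendsto_ln L) (use sp in simp)
  have eq: "ln (\<Prod>r<N. (real r + x) * (real r + (1 - x)) / (real r + 1/2)^2)
          = (\<Sum>r<N. ln ((real r + x) * (real r + (1 - x)) / (real r + 1/2)^2))" for N
    using x by (intro ln_prod) auto
  show ?thesis using L2 unfolding eq by (subst filterlim_sequentially_Suc[symmetric])
qed

definition cq :: "real \<Rightarrow> real \<Rightarrow> nat \<Rightarrow> real" where
  "cq x h r = kq (h * (real r + x)) + kq (h * (real r + (1 - x))) - 2 * kq (h * (real r + 1/2))"

lemma cq_0:
  fixes x h :: real assumes h: "0 < h" and x: "0 < x" "x < 1"
  shows "\<bar>cq x h 0\<bar> \<le> h"
proof -
  have a: "0 < h * x" "0 < h * (1 - x)" "0 < h * (1/2)" using h x by auto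
  note b1 = kq_bounds[OF a(1)] and b2 = kq_bounds[OF a(2)] and b3 = kq_bounds[OF a(3)]
  show ?thesis unfolding cq_def using b1 b2 b3 h x by (simp add: algebra_simps abs_le_iff)
qed

lemma cq_Suc:
  fixes x h :: real assumes h: "0 < h" and x: "0 < x" "x < 1"
  shows "\<bar>cq x h (Suc n)\<bar> \<le> 2 * h * (1 / (1 + h * real n) - 1 / (1 + h * (real n + 1)))"
proof -
  define p where "p = h * (real n + 1 + 1/2)"
  define d where "d = h * (x - 1/2)"
  have "\<bar>x - 1/2\<bar> \<le> 1/2" using x by arith
  hence dle: "\<bar>d\<bar> \<le> h / 2" using h by (simp add: d_def abs_mult)
  have pd: "h * (real n + 1) \<le> p - \<bar>d\<bar>" using dle by (simp add: p_def algebra_simps)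
  have hn: "0 < h * (real n + 1)" using h by simp
  define B where "B = 4 / (1 + h * (real n + 1))^2"
  have Bz: "k2q z \<le> B" if "p - \<bar>d\<bar> \<le> z" "z \<le> p + \<bar>d\<bar>" for z
  proof -
    have z: "h * (real n + 1) \<le> z" using that pd by linarith
    have "k2q z \<le> 4 / (1 + z)^2" using k2q_bounds(2)[of z] z hn by linarith
    also have "\<dots> \<le> B" unfolding B_def using z hn
      by (intro divide_left_mono power_mono mult_pos_pos) auto
    finally show ?thesis .
  qed
  have main: "\<bar>kq (p + d) + kq (p - d) - 2 * kq p\<bar> \<le> 2 * d^2 * B"
    by (rule kq_second_diff) (use pd hn Bz in auto)
  have eqs: "p + d = h * (real (Suc n) + x)" "p - d = h * (real (Suc n) + (1 - x))" "p = h * (real (Suc n) + 1/2)"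
    by (simp_all add: p_def d_def algebra_simps)
  have "d^2 \<le> (h/2)^2" using dle by (metis abs_le_square_iff abs_of_nonneg h half_gt_zero less_imp_le power2_abs)
  hence "2 * d^2 * B \<le> 2 * (h/2)^2 * B" unfolding B_def by (intro mult_right_mono mult_left_mono) auto
  also have "\<dots> = 2 * h^2 / (1 + h * (real n + 1))^2" unfolding B_def by (simp add: power2_eq_square)
  also have "\<dots> \<le> 2 * h^2 / ((1 + h * real n) * (1 + h * (real n + 1)))"
    using h by (intro divide_left_mono) (auto simp: power2_eq_square intro!: mult_right_mono mult_pos_pos add_pos_nonneg)
  also have "\<dots> = 2 * h * (1 / (1 + h * real n) - 1 / (1 + h * (real n + 1)))"
  proof -
    have "0 < 1 + h * real n" "0 < 1 + h * (real n + 1)" using h by (auto intro: add_pos_nonneg)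
    thus ?thesis by (simp add: field_simps power2_eq_square)
  qed
  moreover have "\<bar>cq x h (Suc n)\<bar> \<le> 2 * d^2 * B"
    unfolding cq_def using main by (simp only: eqs[symmetric])
  ultimately show ?thesis by linarith
qed

lemma cq_sum:
  fixes x h :: real assumes h: "0 < h" and x: "0 < x" "x < 1"
  shows "(\<Sum>r<N. \<bar>cq x h r\<bar>) \<le> 3 * h"
proof -
  have "(\<Sum>r<Suc n. \<bar>cq x h r\<bar>) \<le> 3 * h - 2 * h / (1 + h * real n)" for n
  proof (induction n)
    case 0
    then show ?case using cq_0[OF h x] by simp
  next
    case (Suc n)
    have "(\<Sum>r<Suc (Suc n). \<bar>cq x h r\<bar>) = (\<Sum>r<Suc n. \<bar>cq x h r\<bar>) + \<bar>cq x h (Suc n)\<bar>" by simp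
    also have "\<dots> \<le> 3 * h - 2 * h / (1 + h * real n) + 2 * h * (1 / (1 + h * real n) - 1 / (1 + h * (real n + 1)))"
      using Suc cq_Suc[OF h x, of n] by linarith
    also have "\<dots> = 3 * h - 2 * h / (1 + h * real (Suc n))" by (simp add: algebra_simps)
    finally show ?case .
  qed
  note A = this
  show ?thesis
  proof (cases N)
    case 0
    then show ?thesis using h by simp
  next
    case (Suc n)
    have "0 \<le> 2 * h / (1 + h * real n)" using h by simp
    then show ?thesis using A[of n] unfolding Suc by linarith
  qed
qed

definition Tq :: "real \<Rightarrow> real" where "Tq h = (\<Sum>r. gq (h * (real r + 1/2)))"
definition Lq :: "real \<Rightarrow> real \<Rightarrow> real" where
  "Lq x h = (\<Sum>r. gq (h * (real r + x)) + gq (h * (real r + (1 - x))))"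

lemma gq_summable:
  fixes h c :: real assumes "0 < h" "0 < c"
  shows "summable (\<lambda>r. gq (h * (real r + c)))"
  using gq_sums[OF assms] by (rule sums_summable)

lemma main_cmp:
  fixes x h :: real assumes h: "0 < h" and x: "0 < x" "x < 1"
  shows "\<bar>Lq x h - 2 * Tq h - ln (sin (pi * x))\<bar> \<le> 3 * h"
proof -
  define F where "F r = gq (h * (real r + x)) + gq (h * (real r + (1 - x))) - 2 * gq (h * (real r + 1/2))" for r :: nat
  define R where "R r = ln ((real r + x) * (real r + (1 - x)) / (real r + 1/2)^2)" for r :: nat
  have s1: "summable (\<lambda>r. gq (h * (real r + x)))" using gq_summable h x by simp
  have s2: "summable (\<lambda>r. gq (h * (real r + (1 - x))))" using gq_summable h x by simp
  have s3: "summable (\<lambda>r. gq (h * (real r + 1/2)))" using gq_summable h by simp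
  have "(\<lambda>r. gq (h * (real r + x)) + gq (h * (real r + (1 - x)))) sums Lq x h"
    unfolding Lq_def by (intro summable_sums summable_add s1 s2)
  moreover have "(\<lambda>r. 2 * gq (h * (real r + 1/2))) sums (2 * Tq h)"
    unfolding Tq_def by (intro sums_mult summable_sums s3)
  ultimately have FS: "F sums (Lq x h - 2 * Tq h)" unfolding F_def by (rule sums_diff)
  have pw: "F r = cq x h r + R r" for r
  proof -
    have p: "0 < real r + x" "0 < real r + (1 - x)" "0 < real r + 1/2" using x by auto
    have "gq u = kq u + ln u" for u unfolding kq_def by simp
    hence "F r = cq x h r + (ln (h * (real r + x)) + ln (h * (real r + (1 - x))) - 2 * ln (h * (real r + 1/2)))"
      unfolding F_def cq_def by simp
    also have "ln (h * (real r + x)) + ln (h * (real r + (1 - x))) - 2 * ln (h * (real r + 1/2)) = R r"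
      unfolding R_def using p h by (simp add: ln_mult ln_div ln_realpow)
    finally show ?thesis .
  qed
  have l1: "(\<lambda>N. \<Sum>r<N. F r) \<longlonglongrightarrow> Lq x h - 2 * Tq h" using FS unfolding sums_def .
  have l2: "(\<lambda>N. \<Sum>r<N. R r) \<longlonglongrightarrow> ln (sin (pi * x))" unfolding R_def by (rule sin_ratio_lim[OF x])
  have "(\<lambda>N. (\<Sum>r<N. F r) - (\<Sum>r<N. R r)) \<longlonglongrightarrow> Lq x h - 2 * Tq h - ln (sin (pi * x))"
    by (intro tendsto_diff l1 l2)
  moreover have "(\<Sum>r<N. F r) - (\<Sum>r<N. R r) = (\<Sum>r<N. cq x h r)" for N
    unfolding pw by (simp add: sum.distrib)
  ultimately have l3: "(\<lambda>N. \<Sum>r<N. cq x h r) \<longlonglongrightarrow> Lq x h - 2 * Tq h - ln (sin (pi * x))" by simp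
  have "\<bar>\<Sum>r<N. cq x h r\<bar> \<le> 3 * h" for N
    using sum_abs[of "cq x h" "{..<N}"] cq_sum[OF h x, of N] by linarith
  thus ?thesis using LIMSEQ_le_const2[OF tendsto_rabs[OF l3]] by blast
qed

lemma Lq_quarter:
  fixes h :: real assumes h: "0 < h"
  shows "Lq (1/4) h = Tq (h/2)"
proof -
  have "(\<lambda>n. gq (h/2 * (real n + 1/2))) sums Tq (h/2)"
    unfolding Tq_def using gq_summable[of "h/2" "1/2"] h by (intro summable_sums) simp
  from sums_group[OF this, of 2]
  have "(\<lambda>r. \<Sum>n\<in>{r * 2..<r * 2 + 2}. gq (h/2 * (real n + 1/2))) sums Tq (h/2)" by simp
  moreover have "(\<Sum>n\<in>{r * 2..<r * 2 + 2}. gq (h/2 * (real n + 1/2)))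
        = gq (h * (real r + 1/4)) + gq (h * (real r + (1 - 1/4)))" for r
  proof -
    have "{r * 2..<r * 2 + 2} = {2*r, 2*r+1}" by auto
    hence "(\<Sum>n\<in>{r * 2..<r * 2 + 2}. gq (h/2 * (real n + 1/2)))
         = gq (h/2 * (real (2*r) + 1/2)) + gq (h/2 * (real (2*r+1) + 1/2))" by simp
    also have "h/2 * (real (2*r) + 1/2) = h * (real r + 1/4)" by (simp add: algebra_simps)
    also have "h/2 * (real (2*r+1) + 1/2) = h * (real r + (1 - 1/4))" by (simp add: algebra_simps)
    finally show ?thesis .
  qed
  ultimately have "(\<lambda>r. gq (h * (real r + 1/4)) + gq (h * (real r + (1 - 1/4)))) sums Tq (h/2)" by simp
  thus ?thesis unfolding Lq_def by (rule sums_unique[symmetric])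
qed

lemma inv_sq_sums: "(\<lambda>m. 1 / (real m)^2) sums (pi^2 / 6)"
proof -
  have "(\<lambda>m. 1 / (real (Suc m))^2) sums (pi^2 / 6)"
    using inverse_squares_sums by (simp add: add.commute)
  thus ?thesis using sums_Suc_iff[of "\<lambda>m. 1 / (real m)^2" "pi^2/6"] by simp
qed

lemma hT_lim: "((\<lambda>h. h * Tq h) \<longlongrightarrow> - (pi^2 / 6)) (at_right 0)"
proof -
  define a where "a m h = h * exp (- (h * (1/2) * real m)) / (real m * (1 - exp (- (h * real m))))" for m :: nat and h :: real
  define b where "b m = 1 / (real m)^2" for m :: nat
  have bnd: "exp (- (h * real m) / 2) / (real m)^2 \<le> a m h \<and> a m h \<le> b m" if h: "0 < h" for m h
  proof (cases "m = 0")
    case True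
    then show ?thesis by (simp add: a_def b_def)
  next
    case False
    define t where "t = h * real m"
    have t: "0 < t" using h False by (simp add: t_def)
    have e: "exp (- t) < 1" using t by simp
    have w: "t \<le> exp (t/2) - exp (-(t/2))" using sinh_lower[of "t/2"] t by simp
    have f: "1 - exp (-t) = exp (-(t/2)) * (exp (t/2) - exp (-(t/2)))"
      by (simp add: algebra_simps flip: exp_add)
    have up: "exp (-(t/2)) * t \<le> 1 - exp (-t)" unfolding f using w by (simp add: mult_left_mono)
    have lo: "1 - exp (-t) \<le> t" using exp_ge_add_one_self[of "-t"] by simp
    have mpos: "0 < real m" using False by simp
    have aeq: "a m h = h * exp (-(t/2)) / (real m * (1 - exp (-t)))"
      unfolding a_def t_def by (simp add: algebra_simps)
    have "a m h \<le> h * exp (-(t/2)) / (real m * (exp (-(t/2)) * t))"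
      unfolding aeq using up mpos t h by (intro divide_left_mono mult_left_mono mult_pos_pos) auto
    also have "\<dots> = b m" unfolding b_def t_def using mpos h by (simp add: field_simps power2_eq_square)
    finally have 1: "a m h \<le> b m" .
    have "h * exp (-(t/2)) / (real m * t) \<le> a m h"
      unfolding aeq using lo mpos t h e by (intro divide_left_mono mult_left_mono mult_pos_pos) auto
    moreover have "h * exp (-(t/2)) / (real m * t) = exp (- (h * real m) / 2) / (real m)^2"
      unfolding t_def using mpos h by (simp add: field_simps power2_eq_square)
    ultimately show ?thesis using 1 by simp
  qed
  have alim: "((\<lambda>h. a m h) \<longlongrightarrow> b m) (at_right 0)" for m
  proof (rule tendsto_sandwich[of "\<lambda>h. exp (- (h * real m) / 2) * b m" _ _ "\<lambda>_. b m"])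
    show "\<forall>\<^sub>F h in at_right 0. exp (- (h * real m) / 2) * b m \<le> a m h"
      using eventually_at_right_less[of "0::real"] by eventually_elim (use bnd in \<open>auto simp: b_def\<close>)
    show "\<forall>\<^sub>F h in at_right 0. a m h \<le> b m"
      using eventually_at_right_less[of "0::real"] by eventually_elim (use bnd in auto)
    have "((\<lambda>h. exp (- (h * real m) / 2) * b m) \<longlongrightarrow> exp (- (0 * real m) / 2) * b m) (at_right 0)"
      by (intro tendsto_intros) simp
    thus "((\<lambda>h. exp (- (h * real m) / 2) * b m) \<longlongrightarrow> b m) (at_right 0)"
      by simp
  qed simp
  have an: "norm (a m h) \<le> b m" if "0 < h" for m h
    using bnd[OF that, of m] by (smt (verit) divide_nonneg_nonneg exp_gt_zero real_norm_def zero_le_power2)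
  have ev: "\<forall>\<^sub>F (m, h) in sequentially \<times>\<^sub>F at_right 0. norm (a m h) \<le> b m"
  proof -
    show ?thesis
      unfolding eventually_prod_filter
      apply (rule exI[of _ "\<lambda>_. True"], rule exI[of _ "\<lambda>h::real. 0 < h"])
      using eventually_at_right_less[of "0::real"] an by auto
  qed
  have bs: "summable b" unfolding b_def using inv_sq_sums by (rule sums_summable)
  have T: "((\<lambda>h. \<Sum>m. a m h) \<longlongrightarrow> suminf b) (at_right 0)"
    using tannerys_theorem[OF alim ev bs] by simp
  have sb: "suminf b = pi^2/6" unfolding b_def using inv_sq_sums by (rule sums_unique[symmetric])
  have eq: "h * Tq h = - (\<Sum>m. a m h)" if h: "0 < h" for h
  proof -
    have "Tq h = - (\<Sum>m. exp (- (h * (1/2) * real m)) / (real m * (1 - exp (- (h * real m)))))"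
      unfolding Tq_def using gq_sums[of h "1/2"] h by (intro sums_unique[symmetric]) simp
    moreover have "summable (\<lambda>m. exp (- (h * (1/2) * real m)) / (real m * (1 - exp (- (h * real m)))))"
    proof -
      have sa: "summable (\<lambda>m. a m h)"
        by (rule summable_comparison_test'[OF bs, of 0]) (use an h in auto)
      have "(\<lambda>m. exp (- (h * (1/2) * real m)) / (real m * (1 - exp (- (h * real m))))) = (\<lambda>m. a m h / h)"
        unfolding a_def using h by (auto simp: fun_eq_iff)
      thus ?thesis using summable_divide[OF sa, of h] by simp
    qed
    ultimately show ?thesis unfolding a_def
      by (simp add: suminf_mult[symmetric] algebra_simps times_divide_eq_right)
  qed
  have "((\<lambda>h. - (\<Sum>m. a m h)) \<longlongrightarrow> - (pi^2/6)) (at_right 0)"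
    using tendsto_minus[OF T] sb by simp
  moreover have "\<forall>\<^sub>F h in at_right 0. - (\<Sum>m. a m h) = h * Tq h"
    using eventually_at_right_less[of "0::real"] by eventually_elim (use eq in auto)
  ultimately show ?thesis by (rule Lim_transform_eventually)
qed

definition Uq :: "real \<Rightarrow> real" where "Uq h = Tq h + pi^2 / (6 * h) - ln 2 / 2"

lemma Uq_step:
  fixes h :: real assumes h: "0 < h"
  shows "\<bar>Uq (h/2) - 2 * Uq h\<bar> \<le> 3 * h"
proof -
  have s4: "ln (sin (pi / 4)) = - (ln 2 / 2)"
  proof -
    have "ln (sin (pi / 4)) = ln (sqrt 2 / 2)" by (simp only: sin_45)
    also have "\<dots> = ln (sqrt 2) - ln 2" by (rule ln_divide_pos) auto
    also have "\<dots> = - (ln 2 / 2)" by (simp add: ln_sqrt)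
    finally show ?thesis .
  qed
  have "\<bar>Lq (1/4) h - 2 * Tq h - ln (sin (pi * (1/4)))\<bar> \<le> 3 * h"
    using main_cmp[OF h, of "1/4"] by simp
  also have "pi * (1/4) = pi / 4" by simp
  finally have m: "\<bar>Lq (1/4) h - 2 * Tq h + ln 2 / 2\<bar> \<le> 3 * h" unfolding s4 by simp
  have "Uq (h/2) - 2 * Uq h = Tq (h/2) - 2 * Tq h + ln 2 / 2"
    unfolding Uq_def using h by (simp add: field_simps)
  thus ?thesis using m Lq_quarter[OF h] by simp
qed

lemma hU_lim: "((\<lambda>h. h * Uq h) \<longlongrightarrow> 0) (at_right 0)"
proof -
  have "((\<lambda>h. h * Tq h + pi^2/6 - h * (ln 2 / 2)) \<longlongrightarrow> - (pi^2/6) + pi^2/6 - 0 * (ln 2 / 2)) (at_right 0)"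
    by (intro tendsto_intros hT_lim)
  moreover have "\<forall>\<^sub>F h in at_right 0. h * Tq h + pi^2/6 - h * (ln 2 / 2) = h * Uq h"
    using eventually_at_right_less[of "0::real"]
    by eventually_elim (simp add: Uq_def field_simps)
  ultimately show ?thesis using Lim_transform_eventually by fastforce
qed

lemma Uq_iter:
  fixes n :: nat shows "\<And>h. 0 < h \<Longrightarrow> \<bar>Uq h - Uq (h / 2^n) / 2^n\<bar> \<le> 2 * h * (1 - 1 / 4^n)"
proof (induction n)
  case 0
  then show ?case by simp
next
  case (Suc n)
  have h2: "0 < h / 2" using Suc.prems by simp
  have IH: "\<bar>Uq (h/2) - Uq ((h/2) / 2^n) / 2^n\<bar> \<le> 2 * (h/2) * (1 - 1 / 4^n)"
    using Suc.IH[OF h2] .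
  have st: "\<bar>Uq (h/2) - 2 * Uq h\<bar> \<le> 3 * h" using Uq_step[OF Suc.prems] .
  have eq: "Uq h - Uq (h / 2^Suc n) / 2^Suc n = (Uq h - Uq (h/2) / 2) + (Uq (h/2) - Uq ((h/2) / 2^n) / 2^n) / 2"
    by (simp add: field_simps)
  have "\<bar>Uq h - Uq (h / 2^Suc n) / 2^Suc n\<bar> \<le> \<bar>Uq h - Uq (h/2) / 2\<bar> + \<bar>Uq (h/2) - Uq ((h/2) / 2^n) / 2^n\<bar> / 2"
    unfolding eq by (simp add: abs_triangle_ineq[THEN order_trans])
  also have "\<bar>Uq h - Uq (h/2) / 2\<bar> = \<bar>Uq (h/2) - 2 * Uq h\<bar> / 2" by (simp add: abs_minus_commute field_simps)
  also have "\<bar>Uq (h/2) - 2 * Uq h\<bar> / 2 + \<bar>Uq (h/2) - Uq ((h/2) / 2^n) / 2^n\<bar> / 2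
        \<le> 3 * h / 2 + 2 * (h/2) * (1 - 1 / 4^n) / 2"
    by (intro add_mono divide_right_mono st IH) simp_all
  also have "\<dots> = 2 * h * (1 - 1 / 4^Suc n)" by (simp add: field_simps)
  finally show ?case .
qed


lemma Uq_bound:
  fixes h :: real assumes h: "0 < h"
  shows "\<bar>Uq h\<bar> \<le> 2 * h"
proof -
  have hs: "filterlim (\<lambda>n. h / 2^n) (at_right 0) sequentially"
  proof -
    have "(\<lambda>n. h * (1/2)^n) \<longlonglongrightarrow> h * 0" by (intro tendsto_intros) simp
    moreover have "(\<lambda>n. h * (1/2)^n) = (\<lambda>n. h / 2^n)" by (simp add: fun_eq_iff power_divide)
    ultimately have "(\<lambda>n. h / 2^n) \<longlonglongrightarrow> 0" by simp
    moreover have "\<forall>\<^sub>F n in sequentially. h / 2^n \<in> {0<..} \<and> h / 2^n \<noteq> 0"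
      using h by (intro always_eventually) simp
    ultimately show ?thesis unfolding filterlim_at by blast
  qed
  have "((\<lambda>n. (h / 2^n) * Uq (h / 2^n)) \<longlongrightarrow> 0) sequentially"
    using filterlim_compose[OF hU_lim hs] by simp
  hence "((\<lambda>n. ((h / 2^n) * Uq (h / 2^n)) / h) \<longlongrightarrow> 0 / h) sequentially"
    using h by (intro tendsto_intros) auto
  moreover have "((h / 2^n) * Uq (h / 2^n)) / h = Uq (h / 2^n) / 2^n" for n :: nat using h by simp
  ultimately have l: "(\<lambda>n. Uq (h / 2^n) / 2^n) \<longlonglongrightarrow> 0" by simp
  have lim: "(\<lambda>n. \<bar>Uq h - Uq (h / 2^n) / 2^n\<bar>) \<longlonglongrightarrow> \<bar>Uq h - 0\<bar>"
    by (intro tendsto_intros l)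
  have bd: "\<bar>Uq h - Uq (h / 2^n) / 2^n\<bar> \<le> 2 * h" for n :: nat
  proof -
    have "0 \<le> 2 * h * (1 / 4^n)" using h by simp
    moreover have "2 * h * (1 - 1 / 4^n) = 2 * h - 2 * h * (1 / 4^n)" by (simp add: algebra_simps)
    ultimately show ?thesis using Uq_iter[OF h, of n] by linarith
  qed
  have "\<bar>Uq h - 0\<bar> \<le> 2 * h"
    by (rule LIMSEQ_le_const2[OF lim]) (use bd in blast)
  thus ?thesis by simp
qed


lemma final_bound:
  fixes x h :: real assumes h: "0 < h" and x: "0 < x" "x < 1"
  shows "\<bar>Lq x h + pi^2 / (3 * h) - ln (2 * sin (pi * x))\<bar> \<le> 7 * h"
proof -
  have sp: "0 < sin (pi * x)" using x by (intro sin_gt_zero) auto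
  have "ln (2 * sin (pi * x)) = ln 2 + ln (sin (pi * x))" using sp by (simp add: ln_mult)
  moreover have "2 * Tq h = 2 * Uq h - pi^2 / (3 * h) + ln 2" unfolding Uq_def using h by (simp add: field_simps)
  ultimately have "Lq x h + pi^2 / (3 * h) - ln (2 * sin (pi * x)) = (Lq x h - 2 * Tq h - ln (sin (pi * x))) + 2 * Uq h"
    by simp
  thus ?thesis using main_cmp[OF h x] Uq_bound[OF h] by simp
qed

lemma qpoch_eq:
  fixes q c d :: real assumes q: "0 < q" "q < 1" and c: "0 < c" and d: "0 < d"
  shows "qpoch q c d = exp (\<Sum>r. gq ((- d * ln q) * (real r + c / d)))"
proof -
  define h where "h = - d * ln q"
  have h: "0 < h" using q d by (simp add: h_def mult_less_0_iff)
  have cd: "0 < c / d" using c d by simp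
  have "1 - q powr (c + d * real r) = exp (gq (h * (real r + c / d)))" for r
  proof -
    have "q powr (c + d * real r) = exp (- (h * (real r + c / d)))"
      using q d by (simp add: powr_def h_def field_simps)
    moreover have "0 < h * (real r + c / d)" using h cd by simp
    hence "0 < 1 - exp (- (h * (real r + c / d)))" by simp
    ultimately show ?thesis unfolding gq_def by simp
  qed
  hence "qpoch q c d = prodinf (\<lambda>r. exp (gq (h * (real r + c / d))))"
    unfolding qpoch_def by simp
  also have "\<dots> = exp (\<Sum>r. gq (h * (real r + c / d)))"
    by (rule prodinf_exp[OF gq_summable[OF h cd]])
  finally show ?thesis unfolding h_def .
qed

theorem mainTheorem7:
  fixes a b :: real
  assumes "a > 0" and "b > 0"
  shows "(\<lambda>q. ln (qpoch q a (a + b) * qpoch q b (a + b))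
              - pi\<^sup>2 / (3 * (a + b) * ln q)
              - ln (2 * sin (a / (a + b) * pi)))
         \<in> O[at_left 1](\<lambda>q. ln q)"
proof (rule bigoI[where c = "7 * (a + b)"])
  define d where "d = a + b"
  define x where "x = a / d"
  have d: "0 < d" using assms by (simp add: d_def)
  have x: "0 < x" "x < 1" using assms by (auto simp: x_def d_def)
  have bx: "b / d = 1 - x" using d by (simp add: x_def d_def field_simps)
  show "\<forall>\<^sub>F q in at_left 1. norm (ln (qpoch q a (a + b) * qpoch q b (a + b))
              - pi\<^sup>2 / (3 * (a + b) * ln q) - ln (2 * sin (a / (a + b) * pi)))
          \<le> 7 * (a + b) * norm (ln q)"
    using eventually_at_left_real[of 0 "1::real", OF zero_less_one]
  proof eventually_elim
    case (elim q)
    hence q: "0 < q" "q < 1" by auto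
    define h where "h = - d * ln q"
    have lnq: "ln q < 0" using q by simp
    have h: "0 < h" using lnq d by (simp add: h_def mult_less_0_iff)
    have qa: "qpoch q a d = exp (\<Sum>r. gq (h * (real r + x)))"
      using qpoch_eq[OF q assms(1) d] by (simp add: h_def x_def)
    have qb: "qpoch q b d = exp (\<Sum>r. gq (h * (real r + (1 - x))))"
      using qpoch_eq[OF q assms(2) d] bx by (simp add: h_def)
    have "ln (qpoch q a d * qpoch q b d) = (\<Sum>r. gq (h * (real r + x))) + (\<Sum>r. gq (h * (real r + (1 - x))))"
      unfolding qa qb by (simp add: exp_add[symmetric])
    also have "\<dots> = Lq x h"
      unfolding Lq_def using gq_summable[OF h x(1)] gq_summable[of h "1 - x"] h x
      by (intro suminf_add) auto
    finally have L: "ln (qpoch q a d * qpoch q b d) = Lq x h" .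
    have P: "pi\<^sup>2 / (3 * d * ln q) = - (pi^2 / (3 * h))"
      using lnq d by (simp add: h_def field_simps)
    have S: "sin (a / d * pi) = sin (pi * x)" by (simp add: x_def mult.commute)
    have "norm (ln (qpoch q a d * qpoch q b d) - pi\<^sup>2 / (3 * d * ln q) - ln (2 * sin (a / d * pi)))
          = \<bar>Lq x h + pi^2 / (3 * h) - ln (2 * sin (pi * x))\<bar>"
      unfolding L P S by simp
    also have "\<dots> \<le> 7 * h" by (rule final_bound[OF h x])
    also have "7 * h = 7 * d * norm (ln q)" using lnq by (simp add: h_def)
    finally show ?case unfolding d_def .
  qed
qed

end
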